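(* Let $d\in\mathcal D$ be optimal, i.e. $J^d_{\mu,\sigma}=\max_{d''\in\mathcal D}J^{d''}_{\mu,\sigma}$, and write $(\mathbf P,\mathbf r,J_\mu,\mathbf g)$ for its quantities. Then for every $d'\in\mathcal D$ with $(\mathbf P',\mathbf r')$, $$\sum_{j\in\mathcal S}p'(i,j)g(j)+r'(i)-\beta(r'(i)-J_\mu)^2\ \le\ \sum_{j\in\mathcal S}p(i,j)g(j)+r(i)-\beta(r(i)-J_\mu)^2\qquad\text{for all } i\in\mathcal S.$$
   Context: Let $\mathcal S=\{1,\dots,S\}$ be a finite state space and $\mathcal A$ a finite action set. For $i,j\in\mathcal S$, $a\in\mathcal A$, let $p^a(i,j)\ge 0$ with $\sum_{j}p^a(i,j)=1$ be transition probabilities and $r(i,a)\in\mathbb R$ rewards. A deterministic stationary policy is a map $d:\mathcal S\to\mathcal A$; $\mathcal D$ denotes the set of such policies. Under $d$, $\mathbf P^d$ is the matrix with entries $p(i,j)=p^{d(i)}(i,j)$ and $\mathbf r^d$ the vector with entries $r(i)=r(i,d(i))$. Standing assumption: for every $d\in\mathcal D$ the chain with transition matrix $\mathbf P^d$ is irreducible, so it has a unique stationary distribution $\boldsymbol\pi^d$ (row vector, $\boldsymbol\pi^d\mathbf P^d=\boldsymbol\pi^d$, $\boldsymbol\pi^d\mathbf 1=1$) with all entries strictly positive. Define $J^d_\mu=\boldsymbol\pi^d\mathbf r^d$, $J^d_\sigma=\sum_i\pi^d(i)(r(i,d(i))-J^d_\mu)^2$, and for fixed $\beta>0$, $J^d_{\mu,\sigma}=J^d_\mu-\beta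 J^d_\sigma=\boldsymbol\pi^d\mathbf f^d$ with $f^d(i)=r(i,d(i))-\beta(r(i,d(i))-J^d_\mu)^2$. The performance potential $\mathbf g^d$ is any solution of $\mathbf g^d=\mathbf f^d-J^d_{\mu,\sigma}\mathbf 1+\mathbf P^d\mathbf g^d$ (unique up to an additive constant vector). *)

theory Defs
  imports Complex_Main
begin

text \<open>States: a finite type 's; actions: a finite type 'a.
  Transition probabilities p a i j = p^a(i,j); rewards r i a = r(i,a).
  A deterministic stationary policy is d :: 's \<Rightarrow> 'a.\<close>

definition trans_mat :: "('a \<Rightarrow> 's \<Rightarrow> 's \<Rightarrow> real) \<Rightarrow> ('s \<Rightarrow> 'a) \<Rightarrow> 's \<Rightarrow> 's \<Rightarrow> real" where
  "trans_mat p d i j = p (d i) i j"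

definition rew_vec :: "('s \<Rightarrow> 'a \<Rightarrow> real) \<Rightarrow> ('s \<Rightarrow> 'a) \<Rightarrow> 's \<Rightarrow> real" where
  "rew_vec r d i = r i (d i)"

definition irreducible_mat :: "('s \<Rightarrow> 's \<Rightarrow> real) \<Rightarrow> bool" where
  "irreducible_mat P \<longleftrightarrow> (\<forall>i j. (i, j) \<in> {(x, y). P x y > 0}\<^sup>*)"

definition is_stationary :: "('s::finite \<Rightarrow> 's \<Rightarrow> real) \<Rightarrow> ('s \<Rightarrow> real) \<Rightarrow> bool" where
  "is_stationary P \<pi> \<longleftrightarrow> (\<forall>j. (\<Sum>i\<in>UNIV. \<pi> i * P i j) = \<pi> j) \<and> (\<Sum>i\<in>UNIV. \<pi> i) = 1"

text \<open>The (unique, under irreducibility) stationary distribution of policy d.\<close>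
definition stat_dist :: "('a \<Rightarrow> 's::finite \<Rightarrow> 's \<Rightarrow> real) \<Rightarrow> ('s \<Rightarrow> 'a) \<Rightarrow> 's \<Rightarrow> real" where
  "stat_dist p d = (THE \<pi>. is_stationary (trans_mat p d) \<pi>)"

definition J_mu :: "('a \<Rightarrow> 's::finite \<Rightarrow> 's \<Rightarrow> real) \<Rightarrow> ('s \<Rightarrow> 'a \<Rightarrow> real) \<Rightarrow> ('s \<Rightarrow> 'a) \<Rightarrow> real" where
  "J_mu p r d = (\<Sum>i\<in>UNIV. stat_dist p d i * rew_vec r d i)"

definition f_vec :: "('a \<Rightarrow> 's::finite \<Rightarrow> 's \<Rightarrow> real) \<Rightarrow> ('s \<Rightarrow> 'a \<Rightarrow> real) \<Rightarrow> real \<Rightarrow> ('s \<Rightarrow> 'a) \<Rightarrow> 's \<Rightarrow> real" where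
  "f_vec p r \<beta> d i = rew_vec r d i - \<beta> * (rew_vec r d i - J_mu p r d)\<^sup>2"

text \<open>Mean-variance criterion J_mu - beta * J_sigma = \<pi> f.\<close>
definition J_mu_sigma :: "('a \<Rightarrow> 's::finite \<Rightarrow> 's \<Rightarrow> real) \<Rightarrow> ('s \<Rightarrow> 'a \<Rightarrow> real) \<Rightarrow> real \<Rightarrow> ('s \<Rightarrow> 'a) \<Rightarrow> real" where
  "J_mu_sigma p r \<beta> d = (\<Sum>i\<in>UNIV. stat_dist p d i * f_vec p r \<beta> d i)"

definition is_potential :: "('a \<Rightarrow> 's::finite \<Rightarrow> 's \<Rightarrow> real) \<Rightarrow> ('s \<Rightarrow> 'a \<Rightarrow> real) \<Rightarrow> real \<Rightarrow> ('s \<Rightarrow> 'a) \<Rightarrow> ('s \<Rightarrow> real) \<Rightarrow> bool" where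
  "is_potential p r \<beta> d g \<longleftrightarrow>
     (\<forall>i. g i = f_vec p r \<beta> d i - J_mu_sigma p r \<beta> d + (\<Sum>j\<in>UNIV. trans_mat p d i j * g j))"

end

theory Submission
  imports Defs "HOL-Analysis.Analysis"
begin

lemma exists_inv:
  fixes P :: "'s::finite \<Rightarrow> 's \<Rightarrow> real"
  assumes rows: "\<And>i. (\<Sum>j\<in>UNIV. P i j) = 1"
  shows "\<exists>\<nu>. \<nu> \<noteq> (\<lambda>_. 0) \<and> (\<forall>j. (\<Sum>i\<in>UNIV. \<nu> i * P i j) = \<nu> j)"
proof -
  define A :: "real^'s^'s" where "A = (\<chi> i j. (if i = j then 1 else 0) - P i j)"
  have "A *v (\<chi> j. 1) = 0"
    by (simp add: A_def matrix_vector_mult_def vec_eq_iff sum_subtractf rows)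
  hence "\<not> (\<forall>x. A *v x = 0 \<longrightarrow> x = 0)"
    by (metis one_index zero_index zero_neq_one vec_lambda_beta)
  hence "det A = 0"
    by (metis invertible_det_nz invertible_left_inverse matrix_left_invertible_ker)
  hence "det (transpose A) = 0" by simp
  hence "\<not> (\<forall>x. transpose A *v x = 0 \<longrightarrow> x = 0)"
    by (metis invertible_det_nz invertible_left_inverse matrix_left_invertible_ker)
  then obtain x where x: "x \<noteq> 0" "transpose A *v x = 0" by blast
  define \<nu> where "\<nu> = (\<lambda>i. x $ i)"
  have "\<nu> \<noteq> (\<lambda>_. 0)" using x(1) by (auto simp: \<nu>_def vec_eq_iff)
  moreover have "\<forall>j. (\<Sum>i\<in>UNIV. \<nu> i * P i j) = \<nu> j"
  proof
    fix j
    have "(transpose A *v x) $ j = 0" using x(2) by simp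
    hence "(\<Sum>i\<in>UNIV. ((if i = j then 1 else 0) - P i j) * x $ i) = 0"
      by (simp add: A_def matrix_vector_mult_def transpose_def)
    moreover have "(\<Sum>i\<in>UNIV. ((if i = j then 1 else 0) - P i j) * x $ i) = (\<Sum>i\<in>UNIV. (if i = j then x $ i else 0) - P i j * x $ i)"
      by (rule sum.cong) (auto simp: algebra_simps)
    ultimately have "(\<Sum>i\<in>UNIV. (if i = j then x $ i else 0) - P i j * x $ i) = 0"
      by simp
    hence "x $ j - (\<Sum>i\<in>UNIV. P i j * x $ i) = 0"
      by (simp add: sum_subtractf)
    thus "(\<Sum>i\<in>UNIV. \<nu> i * P i j) = \<nu> j" by (simp add: \<nu>_def mult.commute)
  qed
  ultimately show ?thesis by blast
qed

lemma pos_part_inv: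
  fixes P :: "'s::finite \<Rightarrow> 's \<Rightarrow> real"
  assumes rows: "\<And>i. (\<Sum>j\<in>UNIV. P i j) = 1"
    and nn: "\<And>i j. P i j \<ge> 0"
    and inv: "\<And>j. (\<Sum>i\<in>UNIV. \<nu> i * P i j) = \<nu> j"
  shows "(\<Sum>i\<in>UNIV. max (\<nu> i) 0 * P i j) = max (\<nu> j) 0"
proof -
  define \<mu> where "\<mu> = (\<lambda>i. max (\<nu> i) 0)"
  have le: "\<mu> j \<le> (\<Sum>i\<in>UNIV. \<mu> i * P i j)" for j
  proof (cases "\<nu> j \<le> 0")
    case True
    then show ?thesis unfolding \<mu>_def by (auto intro!: sum_nonneg simp: nn)
  next
    case False
    have "\<mu> j = (\<Sum>i\<in>UNIV. \<nu> i * P i j)" using False inv[of j] by (simp add: \<mu>_def)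
    also have "\<dots> \<le> (\<Sum>i\<in>UNIV. \<mu> i * P i j)"
      by (intro sum_mono mult_right_mono) (auto simp: \<mu>_def nn)
    finally show ?thesis .
  qed
  have "(\<Sum>j\<in>UNIV. (\<Sum>i\<in>UNIV. \<mu> i * P i j)) = (\<Sum>i\<in>UNIV. \<mu> i * (\<Sum>j\<in>UNIV. P i j))"
    by (subst sum.swap) (simp add: sum_distrib_left)
  also have "\<dots> = (\<Sum>i\<in>UNIV. \<mu> i)" by (simp add: rows)
  finally have "(\<Sum>j\<in>UNIV. (\<Sum>i\<in>UNIV. \<mu> i * P i j) - \<mu> j) = 0"
    by (simp add: sum_subtractf)
  hence "\<forall>j\<in>UNIV. (\<Sum>i\<in>UNIV. \<mu> i * P i j) - \<mu> j = 0"
    using le by (subst (asm) sum_nonneg_eq_0_iff) auto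
  thus ?thesis unfolding \<mu>_def by auto
qed

lemma positivity:
  fixes P :: "'s::finite \<Rightarrow> 's \<Rightarrow> real"
  assumes nn: "\<And>i j. P i j \<ge> 0"
    and irr: "irreducible_mat P"
    and mnn: "\<And>i. \<mu> i \<ge> 0"
    and inv: "\<And>j. (\<Sum>i\<in>UNIV. \<mu> i * P i j) = \<mu> j"
    and k0: "\<mu> k0 > 0"
  shows "\<mu> k > 0"
proof -
  have "(k0, k) \<in> {(x, y). P x y > 0}\<^sup>*" using irr unfolding irreducible_mat_def by blast
  thus ?thesis
  proof (induction rule: rtrancl_induct)
    case base then show ?case using k0 .
  next
    case (step y z)
    have "0 < \<mu> y * P y z" using step by auto
    also have "\<dots> \<le> (\<Sum>i\<in>UNIV. \<mu> i * P i z)"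
      by (rule member_le_sum) (auto simp: mnn nn)
    finally show ?case using inv[of z] by simp
  qed
qed

lemma stat_exists_unique:
  fixes P :: "'s::finite \<Rightarrow> 's \<Rightarrow> real"
  assumes rows: "\<And>i. (\<Sum>j\<in>UNIV. P i j) = 1"
    and nn: "\<And>i j. P i j \<ge> 0"
    and irr: "irreducible_mat P"
  shows "\<exists>\<rho>. is_stationary P \<rho> \<and> (\<forall>k. \<rho> k > 0) \<and> (\<forall>\<pi>. is_stationary P \<pi> \<longrightarrow> \<pi> = \<rho>)"
proof -
  have key: "\<exists>k. \<nu> k > 0 \<Longrightarrow> \<forall>k. max (\<nu> k) 0 > 0"
    if inv: "\<And>j. (\<Sum>i\<in>UNIV. \<nu> i * P i j) = \<nu> j" for \<nu>
  proof -
    assume "\<exists>k. \<nu> k > 0"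
    then obtain k0 where "\<nu> k0 > 0" by blast
    show ?thesis
    proof
      fix k
      show "max (\<nu> k) 0 > 0"
        by (rule positivity[OF nn irr, of "\<lambda>i. max (\<nu> i) 0" k0])
           (use \<open>\<nu> k0 > 0\<close> pos_part_inv[OF rows nn inv] in auto)
    qed
  qed
  obtain \<nu> where nu: "\<nu> \<noteq> (\<lambda>_. 0)" "\<And>j. (\<Sum>i\<in>UNIV. \<nu> i * P i j) = \<nu> j"
    using exists_inv[of P, OF rows] by blast
  obtain \<eta> where eta: "\<And>j. (\<Sum>i\<in>UNIV. \<eta> i * P i j) = \<eta> j" "\<exists>k. \<eta> k > 0"
  proof (cases "\<exists>k. \<nu> k > 0")
    case True then show ?thesis using that nu(2) by blast
  next
    case False
    then obtain k where "\<nu> k < 0" using nu(1)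
      by (metis linorder_neqE_linordered_idom ext)
    moreover have "\<And>j. (\<Sum>i\<in>UNIV. - \<nu> i * P i j) = - \<nu> j"
      using nu(2) by (simp add: sum_negf)
    ultimately show ?thesis using that[of "\<lambda>i. - \<nu> i"] by auto
  qed
  define \<mu> where "\<mu> = (\<lambda>i. max (\<eta> i) 0)"
  have mpos: "\<And>k. \<mu> k > 0" using key[OF eta(1) eta(2)] by (simp add: \<mu>_def)
  have minv: "\<And>j. (\<Sum>i\<in>UNIV. \<mu> i * P i j) = \<mu> j"
    unfolding \<mu>_def by (rule pos_part_inv[OF rows nn eta(1)])
  define s where "s = (\<Sum>i\<in>UNIV. \<mu> i)"
  have spos: "s > 0" unfolding s_def
    by (metis mpos sum_pos finite UNIV_not_empty)
  define \<rho> where "\<rho> = (\<lambda>i. \<mu> i / s)"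
  have rinv: "(\<Sum>i\<in>UNIV. \<rho> i * P i j) = \<rho> j" for j
  proof -
    have "(\<Sum>i\<in>UNIV. \<rho> i * P i j) = (\<Sum>i\<in>UNIV. \<mu> i * P i j) / s"
      by (simp add: \<rho>_def sum_divide_distrib)
    thus ?thesis using minv[of j] by (simp add: \<rho>_def)
  qed
  have rsum: "(\<Sum>i\<in>UNIV. \<rho> i) = 1"
    using spos by (simp add: \<rho>_def s_def sum_divide_distrib[symmetric])
  have rpos: "\<forall>k. \<rho> k > 0" using mpos spos by (simp add: \<rho>_def)
  have st: "is_stationary P \<rho>" using rinv rsum by (simp add: is_stationary_def)
  have uniq: "\<pi> = \<rho>" if "is_stationary P \<pi>" for \<pi>
  proof (rule ccontr)
    assume ne: "\<pi> \<noteq> \<rho>"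
    define \<delta> where "\<delta> = (\<lambda>i. \<pi> i - \<rho> i)"
    have dinv: "(\<Sum>i\<in>UNIV. \<delta> i * P i j) = \<delta> j" for j
      using that rinv[of j] unfolding is_stationary_def \<delta>_def
      by (simp add: left_diff_distrib sum_subtractf)
    have dsum: "(\<Sum>i\<in>UNIV. \<delta> i) = 0"
      using that rsum unfolding is_stationary_def \<delta>_def by (simp add: sum_subtractf)
    have "\<exists>k. \<delta> k > 0"
    proof (rule ccontr)
      assume "\<not> (\<exists>k. \<delta> k > 0)"
      hence le: "\<forall>k. \<delta> k \<le> 0" by (meson not_le)
      have "\<forall>k\<in>UNIV. - \<delta> k = 0"
        using dsum le by (subst sum_nonneg_eq_0_iff[symmetric]) (auto simp: sum_negf)
      hence "\<pi> = \<rho>" by (auto simp: \<delta>_def)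
      thus False using ne by simp
    qed
    hence "\<forall>k. max (\<delta> k) 0 > 0" using key[OF dinv] by blast
    hence "\<forall>k. \<delta> k > 0" by (metis max_def order_less_irrefl)
    hence "(\<Sum>i\<in>UNIV. \<delta> i) > 0" by (simp add: sum_pos)
    thus False using dsum by simp
  qed
  show ?thesis using st rpos uniq by blast
qed

lemma sq_expand:
  fixes \<rho> x :: "'s::finite \<Rightarrow> real"
  shows "(\<Sum>k\<in>UNIV. \<rho> k * (x k - c)\<^sup>2) = (\<Sum>k\<in>UNIV. \<rho> k * (x k)\<^sup>2) - 2*c*(\<Sum>k\<in>UNIV. \<rho> k * x k) + c\<^sup>2 * (\<Sum>k\<in>UNIV. \<rho> k)"
proof -
  have "(\<lambda>k. \<rho> k * (x k - c)\<^sup>2) = (\<lambda>k. \<rho> k * (x k)\<^sup>2 - (2*c) * (\<rho> k * x k) + c\<^sup>2 * \<rho> k)"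
    by (rule ext) (simp add: power2_eq_square algebra_simps)
  hence "(\<Sum>k\<in>UNIV. \<rho> k * (x k - c)\<^sup>2) = (\<Sum>k\<in>UNIV. \<rho> k * (x k)\<^sup>2 - (2*c) * (\<rho> k * x k) + c\<^sup>2 * \<rho> k)"
    by (rule arg_cong[where f="\<lambda>f. sum f UNIV"])
  also have "\<dots> = (\<Sum>k\<in>UNIV. \<rho> k * (x k)\<^sup>2) - (\<Sum>k\<in>UNIV. (2*c) * (\<rho> k * x k)) + (\<Sum>k\<in>UNIV. c\<^sup>2 * \<rho> k)"
    by (simp only: sum.distrib sum_subtractf)
  also have "\<dots> = (\<Sum>k\<in>UNIV. \<rho> k * (x k)\<^sup>2) - 2*c*(\<Sum>k\<in>UNIV. \<rho> k * x k) + c\<^sup>2 * (\<Sum>k\<in>UNIV. \<rho> k)"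
    by (simp only: sum_distrib_left)
  finally show ?thesis .
qed

lemma var_shift:
  fixes \<rho> x :: "'s::finite \<Rightarrow> real"
  assumes "(\<Sum>k\<in>UNIV. \<rho> k) = 1" and m: "m = (\<Sum>k\<in>UNIV. \<rho> k * x k)"
  shows "(\<Sum>k\<in>UNIV. \<rho> k * (x k - c)\<^sup>2) = (\<Sum>k\<in>UNIV. \<rho> k * (x k - m)\<^sup>2) + (m - c)\<^sup>2"
  unfolding sq_expand[of \<rho> x c] sq_expand[of \<rho> x m] m[symmetric] assms(1)
  by (simp add: power2_eq_square algebra_simps)

lemma lin_comb:
  fixes \<rho> a b :: "'s::finite \<Rightarrow> real"
  shows "(\<Sum>k\<in>UNIV. \<rho> k * (a k - \<beta> * b k)) = (\<Sum>k\<in>UNIV. \<rho> k * a k) - \<beta> * (\<Sum>k\<in>UNIV. \<rho> k * b k)"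
proof -
  have "(\<Sum>k\<in>UNIV. \<rho> k * (a k - \<beta> * b k)) = (\<Sum>k\<in>UNIV. \<rho> k * a k - \<beta> * (\<rho> k * b k))"
    by (rule sum.cong) (simp_all add: algebra_simps)
  also have "\<dots> = (\<Sum>k\<in>UNIV. \<rho> k * a k) - \<beta> * (\<Sum>k\<in>UNIV. \<rho> k * b k)"
    by (simp only: sum_subtractf sum_distrib_left)
  finally show ?thesis .
qed

lemma lin3:
  fixes \<rho> a b c :: "'s::finite \<Rightarrow> real"
  shows "(\<Sum>k\<in>UNIV. \<rho> k * (a k + b k - c k)) = (\<Sum>k\<in>UNIV. \<rho> k * a k) + (\<Sum>k\<in>UNIV. \<rho> k * b k) - (\<Sum>k\<in>UNIV. \<rho> k * c k)"
proof -
  have "(\<Sum>k\<in>UNIV. \<rho> k * (a k + b k - c k)) = (\<Sum>k\<in>UNIV. \<rho> k * a k + \<rho> k * b k - \<rho> k * c k)"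
    by (rule sum.cong) (simp_all add: algebra_simps)
  thus ?thesis by (simp only: sum_subtractf sum.distrib)
qed

theorem theorem2:
  fixes p :: "'a::finite \<Rightarrow> 's::finite \<Rightarrow> 's \<Rightarrow> real"
    and r :: "'s \<Rightarrow> 'a \<Rightarrow> real"
    and \<beta> :: real
    and d :: "'s \<Rightarrow> 'a"
    and g :: "'s \<Rightarrow> real"
  assumes p_nonneg: "\<And>a i j. p a i j \<ge> 0"
    and p_stoch: "\<And>a i. (\<Sum>j\<in>UNIV. p a i j) = 1"
    and irred: "\<And>d0. irreducible_mat (trans_mat p d0)"
    and beta_pos: "\<beta> > 0"
    and optimal: "\<And>d''. J_mu_sigma p r \<beta> d'' \<le> J_mu_sigma p r \<beta> d"
    and potential: "is_potential p r \<beta> d g"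
  shows "\<forall>d' i.
     (\<Sum>j\<in>UNIV. p (d' i) i j * g j) + r i (d' i) - \<beta> * (r i (d' i) - J_mu p r d)\<^sup>2
       \<le> (\<Sum>j\<in>UNIV. p (d i) i j * g j) + r i (d i) - \<beta> * (r i (d i) - J_mu p r d)\<^sup>2"
proof (intro allI, rule ccontr)
  fix d' :: "'s \<Rightarrow> 'a" and i :: 's
  define Jm where "Jm = J_mu p r d"
  define J where "J = J_mu_sigma p r \<beta> d"
  define a where "a = d' i"
  define e where "e = d(i := a)"
  define LHS where "LHS = (\<Sum>j\<in>UNIV. p a i j * g j) + r i a - \<beta> * (r i a - Jm)\<^sup>2"
  define RHS where "RHS = (\<Sum>j\<in>UNIV. p (d i) i j * g j) + r i (d i) - \<beta> * (r i (d i) - Jm)\<^sup>2"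
  assume "\<not> ((\<Sum>j\<in>UNIV. p (d' i) i j * g j) + r i (d' i) - \<beta> * (r i (d' i) - J_mu p r d)\<^sup>2
       \<le> (\<Sum>j\<in>UNIV. p (d i) i j * g j) + r i (d i) - \<beta> * (r i (d i) - J_mu p r d)\<^sup>2)"
  hence dpos: "LHS - RHS > 0" by (simp add: LHS_def RHS_def a_def Jm_def)
  define P' where "P' = trans_mat p e"
  have rows: "\<And>k. (\<Sum>j\<in>UNIV. P' k j) = 1" by (simp add: P'_def trans_mat_def p_stoch)
  have nn: "\<And>k j. P' k j \<ge> 0" by (simp add: P'_def trans_mat_def p_nonneg)
  have irr: "irreducible_mat P'" unfolding P'_def by (rule irred)
  obtain \<rho> where st: "is_stationary P' \<rho>" and pos: "\<forall>k. \<rho> k > 0"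
      and un: "\<forall>\<pi>. is_stationary P' \<pi> \<longrightarrow> \<pi> = \<rho>"
    using stat_exists_unique[of P', OF rows nn irr] by blast
  have sd: "stat_dist p e = \<rho>"
    unfolding stat_dist_def P'_def[symmetric] using st un by (intro the_equality) blast+
  have rsum: "(\<Sum>k\<in>UNIV. \<rho> k) = 1" and rinv: "\<And>j. (\<Sum>k\<in>UNIV. \<rho> k * P' k j) = \<rho> j"
    using st unfolding is_stationary_def by blast+
  define h where "h = (\<lambda>k. rew_vec r e k - \<beta> * (rew_vec r e k - Jm)\<^sup>2)"
  have f1: "h k + (\<Sum>j\<in>UNIV. P' k j * g j) - g k = J + (if k = i then LHS - RHS else 0)" for k
  proof -
    have pot: "g k = f_vec p r \<beta> d k - J + (\<Sum>j\<in>UNIV. trans_mat p d k j * g j)"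
      using potential unfolding is_potential_def J_def by blast
    show ?thesis
    proof (cases "k = i")
      case True
      have e1: "h k = r i a - \<beta> * (r i a - Jm)\<^sup>2"
        using True by (simp add: h_def rew_vec_def e_def)
      have e2: "(\<Sum>j\<in>UNIV. P' k j * g j) = (\<Sum>j\<in>UNIV. p a i j * g j)"
        using True by (simp add: P'_def e_def trans_mat_def)
      have e3: "f_vec p r \<beta> d k = r i (d i) - \<beta> * (r i (d i) - Jm)\<^sup>2"
        using True by (simp add: f_vec_def rew_vec_def Jm_def)
      have e4: "(\<Sum>j\<in>UNIV. trans_mat p d k j * g j) = (\<Sum>j\<in>UNIV. p (d i) i j * g j)"
        using True by (simp add: trans_mat_def)
      have "(if k = i then LHS - RHS else 0) = LHS - RHS" using True by simp
      thus ?thesis using pot e1 e2 e3 e4 unfolding LHS_def RHS_def by linarith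
    next
      case False
      have e1: "h k = f_vec p r \<beta> d k"
        using False by (simp add: h_def rew_vec_def e_def f_vec_def Jm_def)
      have e2: "(\<Sum>j\<in>UNIV. P' k j * g j) = (\<Sum>j\<in>UNIV. trans_mat p d k j * g j)"
        using False by (simp add: P'_def e_def trans_mat_def)
      have "(if k = i then LHS - RHS else 0) = 0" using False by simp
      thus ?thesis using pot e1 e2 by linarith
    qed
  qed
  have f2: "(\<Sum>k\<in>UNIV. \<rho> k * (h k + (\<Sum>j\<in>UNIV. P' k j * g j) - g k)) = (\<Sum>k\<in>UNIV. \<rho> k * h k)"
  proof -
    have mid: "(\<Sum>k\<in>UNIV. \<rho> k * (\<Sum>j\<in>UNIV. P' k j * g j)) = (\<Sum>j\<in>UNIV. \<rho> j * g j)"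
    proof -
      have "(\<Sum>k\<in>UNIV. \<rho> k * (\<Sum>j\<in>UNIV. P' k j * g j)) = (\<Sum>k\<in>UNIV. \<Sum>j\<in>UNIV. \<rho> k * (P' k j * g j))"
        by (simp add: sum_distrib_left)
      also have "\<dots> = (\<Sum>j\<in>UNIV. \<Sum>k\<in>UNIV. \<rho> k * (P' k j * g j))"
        by (rule sum.swap)
      also have "\<dots> = (\<Sum>j\<in>UNIV. (\<Sum>k\<in>UNIV. \<rho> k * P' k j) * g j)"
        by (simp add: sum_distrib_right mult.assoc)
      finally show ?thesis by (simp add: rinv)
    qed
    have "(\<Sum>k\<in>UNIV. \<rho> k * (h k + (\<Sum>j\<in>UNIV. P' k j * g j) - g k)) =
      (\<Sum>k\<in>UNIV. \<rho> k * h k) + (\<Sum>k\<in>UNIV. \<rho> k * (\<Sum>j\<in>UNIV. P' k j * g j)) - (\<Sum>k\<in>UNIV. \<rho> k * g k)"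
      by (rule lin3)
    thus ?thesis using mid by simp
  qed
  have f3: "(\<Sum>k\<in>UNIV. \<rho> k * (J + (if k = i then LHS - RHS else 0))) = J + \<rho> i * (LHS - RHS)"
  proof -
    have "(\<Sum>k\<in>UNIV. \<rho> k * (J + (if k = i then LHS - RHS else 0))) =
        J * (\<Sum>k\<in>UNIV. \<rho> k) + (\<Sum>k\<in>UNIV. (if k = i then \<rho> k * (LHS - RHS) else 0))"
    proof -
      have "(\<Sum>k\<in>UNIV. \<rho> k * (J + (if k = i then LHS - RHS else 0))) =
          (\<Sum>k\<in>UNIV. J * \<rho> k + (if k = i then \<rho> k * (LHS - RHS) else 0))"
        by (rule sum.cong) (simp_all add: algebra_simps)
      thus ?thesis by (simp only: sum.distrib sum_distrib_left)
    qed
    thus ?thesis using rsum by simp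
  qed
  have sumh: "(\<Sum>k\<in>UNIV. \<rho> k * h k) = J + \<rho> i * (LHS - RHS)"
    using f1 f2 f3 by simp
  define Jm' where "Jm' = (\<Sum>k\<in>UNIV. \<rho> k * rew_vec r e k)"
  have Jme: "J_mu p r e = Jm'" by (simp add: J_mu_def sd Jm'_def)
  have f4: "J_mu_sigma p r \<beta> e = (\<Sum>k\<in>UNIV. \<rho> k * h k) + \<beta> * (Jm' - Jm)\<^sup>2"
  proof -
    have vs: "(\<Sum>k\<in>UNIV. \<rho> k * (rew_vec r e k - Jm)\<^sup>2) =
        (\<Sum>k\<in>UNIV. \<rho> k * (rew_vec r e k - Jm')\<^sup>2) + (Jm' - Jm)\<^sup>2"
      by (rule var_shift[OF rsum Jm'_def])
    have "J_mu_sigma p r \<beta> e = (\<Sum>k\<in>UNIV. \<rho> k * rew_vec r e k) - \<beta> * (\<Sum>k\<in>UNIV. \<rho> k * (rew_vec r e k - Jm')\<^sup>2)"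
      unfolding J_mu_sigma_def f_vec_def sd Jme by (rule lin_comb)
    moreover have "(\<Sum>k\<in>UNIV. \<rho> k * h k) = (\<Sum>k\<in>UNIV. \<rho> k * rew_vec r e k) - \<beta> * (\<Sum>k\<in>UNIV. \<rho> k * (rew_vec r e k - Jm)\<^sup>2)"
      unfolding h_def by (rule lin_comb)
    ultimately show ?thesis using vs by (simp add: algebra_simps)
  qed
  have "\<beta> * (Jm' - Jm)\<^sup>2 \<ge> 0" using beta_pos by simp
  moreover have "\<rho> i * (LHS - RHS) > 0" using pos dpos by simp
  ultimately have "J_mu_sigma p r \<beta> e > J" using f4 sumh by linarith
  thus False using optimal[of e] J_def by simp
qed

end
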